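(* Suppose each $X_k$ is a partially ordered set, and $f\colon\prod_{i\in[n]}X_i\to Y$ satisfies condition (BC) and is order-preserving with respect to the componentwise order. Then each $\Phi_k^-$ and $\Phi_k^+$ ($k\in[n]$) is order-preserving. Consequently, if moreover $f$ is a pseudo-polynomial function, then there exist a polynomial function $p\colon Y^n\to Y$ and order-preserving maps $\varphi_k\colon X_k\to Y$ satisfying the boundary condition such that $f(\mathbf{x})=p(\varphi_1(x_1),\ldots,\varphi_n(x_n))$ for all $\mathbf{x}$.
   Context: $Y$ is a finite distributive lattice identified with a sublattice of $\mathcal{P}(U)$ for a finite set $U$, with least element $0=\emptyset$, greatest element $1=U$, and $\wedge,\vee$ being intersection and union; $\overline{S}=U\setminus S$. For $S\subseteq U$, $\operatorname{cl}(S)=\bigwedge\{y\in Y: y\ge S\}$, $\operatorname{int}(S)=\bigvee\{y\in Y: y\le S\}$. $[n]=\{1,\ldots,n\}$; $X_1,\ldots,X_n$ are sets with at least two elements, each with two fixed distinct elements $0_{X_k},1_{X_k}$ (written $0,1$). For $\mathbf{x}\in\prod_i X_i$ and $a\in X_k$, $\mathbf{x}_k^a$ is $\mathbf{x}$ with $k$-th component replaced by $a$. A map $\varphi_k\colon X_k\to Y$ satisfies the boundary condition if $\varphi_k(0_{X_k})\le\varphi_k(x_k)\le\varphi_k(1_{X_k})$ for all $x_k$. A polynomial function $Y^n\to Y$ is a composition of $\wedge,\vee$ with variables and constants. $f$ is a pseudo-polynomial function if $f(\mathbf{x})=p(\varphi_1(x_1),\ldots,\varphi_n(x_n))$ for some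 polynomial function $p$ and maps $\varphi_k$ satisfying the boundary condition. Condition (BC): $f(\mathbf{x}_k^0)\le f(\mathbf{x})\le f(\mathbf{x}_k^1)$ for all $k$ and $\mathbf{x}$. For $k\in[n]$, $a_k\in X_k$: $$\Phi_k^-(a_k)=\bigvee_{\mathbf{x}:\,x_k=a_k}\operatorname{cl}\big(f(\mathbf{x})\wedge\overline{f(\mathbf{x}_k^0)}\big),\qquad \Phi_k^+(a_k)=\bigwedge_{\mathbf{x}:\,x_k=a_k}\operatorname{int}\big(f(\mathbf{x})\vee\overline{f(\mathbf{x}_k^1)}\big),$$ ranging over all $\mathbf{x}$ with $k$-th component $a_k$. *)

theory Defs
  imports Main "HOL-Library.FuncSet"
begin

text \<open>Y: a finite distributive lattice, represented as a sublattice of Pow U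
  containing the empty set (least element) and U (greatest element).\<close>
definition set_lattice :: "'u set \<Rightarrow> 'u set set \<Rightarrow> bool" where
  "set_lattice U Y \<longleftrightarrow> finite U \<and> Y \<subseteq> Pow U \<and> {} \<in> Y \<and> U \<in> Y \<and>
     (\<forall>a\<in>Y. \<forall>b\<in>Y. a \<inter> b \<in> Y \<and> a \<union> b \<in> Y)"

definition lcl :: "'u set set \<Rightarrow> 'u set \<Rightarrow> 'u set" where
  "lcl Y S = \<Inter> {y \<in> Y. S \<subseteq> y}"

definition lint :: "'u set set \<Rightarrow> 'u set \<Rightarrow> 'u set" where
  "lint Y S = \<Union> {y \<in> Y. y \<subseteq> S}"

definition poset_on :: "'a set \<Rightarrow> ('a \<Rightarrow> 'a \<Rightarrow> bool) \<Rightarrow> bool" where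
  "poset_on A le \<longleftrightarrow> (\<forall>a\<in>A. le a a) \<and>
     (\<forall>a\<in>A. \<forall>b\<in>A. le a b \<and> le b a \<longrightarrow> a = b) \<and>
     (\<forall>a\<in>A. \<forall>b\<in>A. \<forall>c\<in>A. le a b \<and> le b c \<longrightarrow> le a c)"

abbreviation prodX :: "nat \<Rightarrow> (nat \<Rightarrow> 'x set) \<Rightarrow> (nat \<Rightarrow> 'x) set" where
  "prodX n X \<equiv> Pi\<^sub>E {1..n} X"

datatype 'c lterm = LVar nat | LConst 'c | LMeet "'c lterm" "'c lterm" | LJoin "'c lterm" "'c lterm"

primrec leval :: "'u set lterm \<Rightarrow> (nat \<Rightarrow> 'u set) \<Rightarrow> 'u set" where
  "leval (LVar i) y = y i"
| "leval (LConst c) y = c"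
| "leval (LMeet s t) y = leval s y \<inter> leval t y"
| "leval (LJoin s t) y = leval s y \<union> leval t y"

primrec lvars :: "'c lterm \<Rightarrow> nat set" where
  "lvars (LVar i) = {i}"
| "lvars (LConst c) = {}"
| "lvars (LMeet s t) = lvars s \<union> lvars t"
| "lvars (LJoin s t) = lvars s \<union> lvars t"

primrec lconsts :: "'c lterm \<Rightarrow> 'c set" where
  "lconsts (LVar i) = {}"
| "lconsts (LConst c) = {c}"
| "lconsts (LMeet s t) = lconsts s \<union> lconsts t"
| "lconsts (LJoin s t) = lconsts s \<union> lconsts t"

definition polynomial_fun :: "'u set set \<Rightarrow> nat \<Rightarrow> ((nat \<Rightarrow> 'u set) \<Rightarrow> 'u set) \<Rightarrow> bool" where
  "polynomial_fun Y n p \<longleftrightarrow> (\<exists>t. lvars t \<subseteq> {1..n} \<and> lconsts t \<subseteq> Y \<and>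
     (\<forall>y\<in>Pi\<^sub>E {1..n} (\<lambda>_. Y). p y = leval t y))"

definition boundary_cond :: "'x set \<Rightarrow> 'x \<Rightarrow> 'x \<Rightarrow> ('x \<Rightarrow> 'u set) \<Rightarrow> bool" where
  "boundary_cond A z w \<phi> \<longleftrightarrow> (\<forall>a\<in>A. \<phi> z \<subseteq> \<phi> a \<and> \<phi> a \<subseteq> \<phi> w)"

definition pseudo_polynomial ::
  "'u set set \<Rightarrow> nat \<Rightarrow> (nat \<Rightarrow> 'x set) \<Rightarrow> (nat \<Rightarrow> 'x) \<Rightarrow> (nat \<Rightarrow> 'x)
    \<Rightarrow> ((nat \<Rightarrow> 'x) \<Rightarrow> 'u set) \<Rightarrow> bool" where
  "pseudo_polynomial Y n X zero one f \<longleftrightarrow>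
     (\<exists>p \<phi>. polynomial_fun Y n p \<and>
        (\<forall>k\<in>{1..n}. \<phi> k \<in> X k \<rightarrow> Y \<and> boundary_cond (X k) (zero k) (one k) (\<phi> k)) \<and>
        (\<forall>x\<in>prodX n X. f x = p (\<lambda>i\<in>{1..n}. \<phi> i (x i))))"

definition cond_BC ::
  "nat \<Rightarrow> (nat \<Rightarrow> 'x set) \<Rightarrow> (nat \<Rightarrow> 'x) \<Rightarrow> (nat \<Rightarrow> 'x) \<Rightarrow> ((nat \<Rightarrow> 'x) \<Rightarrow> 'u set) \<Rightarrow> bool" where
  "cond_BC n X zero one f \<longleftrightarrow> (\<forall>k\<in>{1..n}. \<forall>x\<in>prodX n X.
      f (x(k := zero k)) \<subseteq> f x \<and> f x \<subseteq> f (x(k := one k)))"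

definition PhiMinus ::
  "'u set \<Rightarrow> 'u set set \<Rightarrow> nat \<Rightarrow> (nat \<Rightarrow> 'x set) \<Rightarrow> (nat \<Rightarrow> 'x) \<Rightarrow> ((nat \<Rightarrow> 'x) \<Rightarrow> 'u set)
    \<Rightarrow> nat \<Rightarrow> 'x \<Rightarrow> 'u set" where
  "PhiMinus U Y n X zero f k a =
     \<Union> {lcl Y (f x \<inter> (U - f (x(k := zero k)))) | x. x \<in> prodX n X \<and> x k = a}"

definition PhiPlus ::
  "'u set \<Rightarrow> 'u set set \<Rightarrow> nat \<Rightarrow> (nat \<Rightarrow> 'x set) \<Rightarrow> (nat \<Rightarrow> 'x) \<Rightarrow> ((nat \<Rightarrow> 'x) \<Rightarrow> 'u set)
    \<Rightarrow> nat \<Rightarrow> 'x \<Rightarrow> 'u set" where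
  "PhiPlus U Y n X one f k a =
     \<Inter> {lint Y (f x \<union> (U - f (x(k := one k)))) | x. x \<in> prodX n X \<and> x k = a}"

end

theory Submission
  imports Defs
begin

lemma leval_mono: "(\<And>i. y i \<subseteq> y' i) \<Longrightarrow> leval t y \<subseteq> leval t y'"
  by (induction t) auto

lemma leval_cong: "(\<And>i. i \<in> lvars t \<Longrightarrow> y i = y' i) \<Longrightarrow> leval t y = leval t y'"
  by (induction t) auto

lemma leval_decomp:
  assumes "c \<subseteq> u" "u \<subseteq> d"
  shows "leval t (y(k:=u)) = leval t (y(k:=c)) \<union> (u \<inter> leval t (y(k:=d)))"
  using assms
proof (induction t)
  case (LMeet s r)
  have m1: "leval s (y(k:=c)) \<subseteq> leval s (y(k:=d))"
    by (rule leval_mono) (use LMeet.prems in auto)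
  have m2: "leval r (y(k:=c)) \<subseteq> leval r (y(k:=d))"
    by (rule leval_mono) (use LMeet.prems in auto)
  have e1: "leval s (y(k:=u)) = leval s (y(k:=c)) \<union> (u \<inter> leval s (y(k:=d)))"
    using LMeet.IH(1) LMeet.prems by blast
  have e2: "leval r (y(k:=u)) = leval r (y(k:=c)) \<union> (u \<inter> leval r (y(k:=d)))"
    using LMeet.IH(2) LMeet.prems by blast
  show ?case unfolding leval.simps e1 e2 using m1 m2 by blast
next
  case (LJoin s r)
  then show ?case by auto
qed auto

lemma lcl_mono: "S \<subseteq> S' \<Longrightarrow> lcl Y S \<subseteq> lcl Y S'"
  unfolding lcl_def by blast

lemma lint_mono: "S \<subseteq> S' \<Longrightarrow> lint Y S \<subseteq> lint Y S'"
  unfolding lint_def by blast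

lemma union_closed:
  assumes Y: "set_lattice U Y" and F: "F \<subseteq> Y" "F \<noteq> {}"
  shows "\<Union>F \<in> Y"
proof -
  have "finite Y" using Y unfolding set_lattice_def by (meson finite_Pow_iff finite_subset)
  then have "finite F" using F finite_subset by blast
  have "F \<subseteq> Y \<longrightarrow> \<Union>F \<in> Y" using \<open>finite F\<close> \<open>F \<noteq> {}\<close>
  proof (induction F rule: finite_ne_induct)
    case (insert x F)
    then show ?case using Y unfolding set_lattice_def by auto
  qed auto
  then show ?thesis using F by blast
qed

lemma upd_in: "x \<in> Pi\<^sub>E {1..n} X \<Longrightarrow> k \<in> {1..n} \<Longrightarrow> b \<in> X k \<Longrightarrow> x(k:=b) \<in> Pi\<^sub>E {1..n} X"
  by (auto simp: PiE_def Pi_def extensional_def)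

theorem mainTheorem10:
  fixes U :: "'u set" and Y :: "'u set set" and n :: nat
    and X :: "nat \<Rightarrow> 'x set" and le :: "nat \<Rightarrow> 'x \<Rightarrow> 'x \<Rightarrow> bool"
    and zero one :: "nat \<Rightarrow> 'x" and f :: "(nat \<Rightarrow> 'x) \<Rightarrow> 'u set"
  assumes Y: "set_lattice U Y"
    and X01: "\<forall>k\<in>{1..n}. zero k \<in> X k \<and> one k \<in> X k \<and> zero k \<noteq> one k"
    and poset: "\<forall>k\<in>{1..n}. poset_on (X k) (le k)"
    and f_into: "f \<in> prodX n X \<rightarrow> Y"
    and BC: "cond_BC n X zero one f"
    and mono: "\<forall>x\<in>prodX n X. \<forall>y\<in>prodX n X. (\<forall>i\<in>{1..n}. le i (x i) (y i)) \<longrightarrow> f x \<subseteq> f y"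
  shows "(\<forall>k\<in>{1..n}. \<forall>a\<in>X k. \<forall>b\<in>X k. le k a b \<longrightarrow>
            PhiMinus U Y n X zero f k a \<subseteq> PhiMinus U Y n X zero f k b \<and>
            PhiPlus U Y n X one f k a \<subseteq> PhiPlus U Y n X one f k b)
     \<and> (pseudo_polynomial Y n X zero one f \<longrightarrow>
         (\<exists>p \<phi>. polynomial_fun Y n p \<and>
            (\<forall>k\<in>{1..n}. \<phi> k \<in> X k \<rightarrow> Y \<and> boundary_cond (X k) (zero k) (one k) (\<phi> k) \<and>
               (\<forall>a\<in>X k. \<forall>b\<in>X k. le k a b \<longrightarrow> \<phi> k a \<subseteq> \<phi> k b)) \<and>
            (\<forall>x\<in>prodX n X. f x = p (\<lambda>i\<in>{1..n}. \<phi> i (x i)))))"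
proof -
  have refl: "\<And>i a. i \<in> {1..n} \<Longrightarrow> a \<in> X i \<Longrightarrow> le i a a"
    using poset unfolding poset_on_def by blast
  have trans: "\<And>i a b c. i \<in> {1..n} \<Longrightarrow> a \<in> X i \<Longrightarrow> b \<in> X i \<Longrightarrow> c \<in> X i \<Longrightarrow>
      le i a b \<Longrightarrow> le i b c \<Longrightarrow> le i a c"
    using poset unfolding poset_on_def by blast
  have monoU: "f (x(k:=a)) \<subseteq> f (x(k:=b))"
    if "x \<in> prodX n X" "k \<in> {1..n}" "a \<in> X k" "b \<in> X k" "le k a b" for x k a b
  proof -
    have "x i \<in> X i" if "i \<in> {1..n}" for i using \<open>x \<in> prodX n X\<close> that by auto
    then have "\<forall>i\<in>{1..n}. le i ((x(k:=a)) i) ((x(k:=b)) i)"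
      using that refl by auto
    then show ?thesis using mono upd_in[OF that(1,2,3)] upd_in[OF that(1,2,4)] by blast
  qed
  have part1: "\<forall>k\<in>{1..n}. \<forall>a\<in>X k. \<forall>b\<in>X k. le k a b \<longrightarrow>
            PhiMinus U Y n X zero f k a \<subseteq> PhiMinus U Y n X zero f k b \<and>
            PhiPlus U Y n X one f k a \<subseteq> PhiPlus U Y n X one f k b"
  proof (intro ballI impI conjI)
    fix k a b assume k: "k \<in> {1..n}" and a: "a \<in> X k" and b: "b \<in> X k" and ab: "le k a b"
    show "PhiMinus U Y n X zero f k a \<subseteq> PhiMinus U Y n X zero f k b"
      unfolding PhiMinus_def
    proof (rule Union_least)
      fix S assume "S \<in> {lcl Y (f x \<inter> (U - f (x(k := zero k)))) | x. x \<in> prodX n X \<and> x k = a}"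
      then obtain x where x: "x \<in> prodX n X" "x k = a"
        and S: "S = lcl Y (f x \<inter> (U - f (x(k := zero k))))" by blast
      have xa: "x(k:=a) = x" using x by auto
      have "f x \<subseteq> f (x(k:=b))" using monoU[OF x(1) k a b ab] xa by simp
      then have "S \<subseteq> lcl Y (f (x(k:=b)) \<inter> (U - f ((x(k:=b))(k := zero k))))"
        unfolding S by (intro lcl_mono) auto
      moreover have "lcl Y (f (x(k:=b)) \<inter> (U - f ((x(k:=b))(k := zero k)))) \<in>
          {lcl Y (f x \<inter> (U - f (x(k := zero k)))) | x. x \<in> prodX n X \<and> x k = b}"
        using upd_in[OF x(1) k b] by (intro CollectI exI[where x="x(k:=b)"]) simp
      ultimately show "S \<subseteq> \<Union> {lcl Y (f x \<inter> (U - f (x(k := zero k)))) | x. x \<in> prodX n X \<and> x k = b}"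
        by (meson Union_upper subset_trans)
    qed
    show "PhiPlus U Y n X one f k a \<subseteq> PhiPlus U Y n X one f k b"
      unfolding PhiPlus_def
    proof (rule Inter_greatest)
      fix S assume "S \<in> {lint Y (f x \<union> (U - f (x(k := one k)))) | x. x \<in> prodX n X \<and> x k = b}"
      then obtain y where y: "y \<in> prodX n X" "y k = b"
        and S: "S = lint Y (f y \<union> (U - f (y(k := one k))))" by blast
      have yb: "y(k:=b) = y" using y by auto
      have "f (y(k:=a)) \<subseteq> f y" using monoU[OF y(1) k a b ab] yb by simp
      then have "lint Y (f (y(k:=a)) \<union> (U - f ((y(k:=a))(k := one k)))) \<subseteq> S"
        unfolding S by (intro lint_mono) auto
      moreover have "lint Y (f (y(k:=a)) \<union> (U - f ((y(k:=a))(k := one k)))) \<in>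
          {lint Y (f x \<union> (U - f (x(k := one k)))) | x. x \<in> prodX n X \<and> x k = a}"
        using upd_in[OF y(1) k a] by (intro CollectI exI[where x="y(k:=a)"]) simp
      ultimately show "\<Inter> {lint Y (f x \<union> (U - f (x(k := one k)))) | x. x \<in> prodX n X \<and> x k = a} \<subseteq> S"
        by (meson Inter_lower subset_trans)
    qed
  qed
  show ?thesis
  proof (intro conjI impI part1)
    assume "pseudo_polynomial Y n X zero one f"
    then obtain p0 \<phi>0 where pp: "polynomial_fun Y n p0"
      and phi0: "\<forall>k\<in>{1..n}. \<phi>0 k \<in> X k \<rightarrow> Y \<and> boundary_cond (X k) (zero k) (one k) (\<phi>0 k)"
      and rep: "\<forall>x\<in>prodX n X. f x = p0 (\<lambda>i\<in>{1..n}. \<phi>0 i (x i))"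
      unfolding pseudo_polynomial_def by (elim exE conjE) (rule that)
    obtain t where tv: "lvars t \<subseteq> {1..n}" and tc: "lconsts t \<subseteq> Y"
      and tp: "\<forall>y\<in>Pi\<^sub>E {1..n} (\<lambda>_. Y). p0 y = leval t y"
      using pp unfolding polynomial_fun_def by (elim exE conjE) (rule that)
    have fF: "f x = leval t (\<lambda>i. \<phi>0 i (x i))" if x: "x \<in> prodX n X" for x
    proof -
      have "(\<lambda>i\<in>{1..n}. \<phi>0 i (x i)) \<in> Pi\<^sub>E {1..n} (\<lambda>_. Y)"
      proof -
        have "\<phi>0 i (x i) \<in> Y" if "i \<in> {1..n}" for i
          using phi0 that x by (auto simp: PiE_iff Pi_iff)
        then show ?thesis by (auto simp: PiE_iff)
      qed
      then have "f x = leval t (\<lambda>i\<in>{1..n}. \<phi>0 i (x i))" using rep tp x by simp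
      also have "\<dots> = leval t (\<lambda>i. \<phi>0 i (x i))" by (rule leval_cong) (use tv in auto)
      finally show ?thesis .
    qed
    define g where "g k a = \<Union>{\<phi>0 k b | b. b \<in> X k \<and> le k b a}" for k a
    define \<psi> where "\<psi> k a = g k a \<union> g k (zero k)" for k a
    have bnd: "\<phi>0 k (zero k) \<subseteq> \<phi>0 k a \<and> \<phi>0 k a \<subseteq> \<phi>0 k (one k)"
      if "k \<in> {1..n}" "a \<in> X k" for k a
      using phi0 that unfolding boundary_cond_def by blast
    have gY: "g k a \<in> Y" if "k \<in> {1..n}" "a \<in> X k" for k a
      unfolding g_def
      by (rule union_closed[OF Y]) (use phi0 that refl in fastforce)+
    have phig: "\<phi>0 k a \<subseteq> g k a" if "k \<in> {1..n}" "a \<in> X k" for k a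
      unfolding g_def using that refl by blast
    have gd: "g k a \<subseteq> \<phi>0 k (one k)" if "k \<in> {1..n}" for k a
      unfolding g_def using bnd that by blast
    have gmono: "g k a \<subseteq> g k b" if "k \<in> {1..n}" "a \<in> X k" "b \<in> X k" "le k a b" for k a b
      unfolding g_def using trans that by blast
    have psiY: "\<psi> k a \<in> Y" if "k \<in> {1..n}" "a \<in> X k" for k a
      using gY[OF that] gY[OF that(1)] X01 that Y unfolding \<psi>_def set_lattice_def by blast
    have psic: "\<phi>0 k (zero k) \<subseteq> \<psi> k a" "\<psi> k a \<subseteq> \<phi>0 k (one k)"
      if "k \<in> {1..n}" "a \<in> X k" for k a
      using phig[OF that] bnd[OF that] gd[OF that(1)] unfolding \<psi>_def by auto
    define z where "z m x = (\<lambda>i. if i \<le> m then \<psi> i (x i) else \<phi>0 i (x i))" for m x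
    have stage: "m \<le> n \<Longrightarrow> \<forall>x\<in>prodX n X. leval t (z m x) = f x" for m
    proof (induction m)
      case 0
      show ?case
      proof
        fix x assume x: "x \<in> prodX n X"
        have "leval t (z 0 x) = leval t (\<lambda>i. \<phi>0 i (x i))"
          by (rule leval_cong) (use tv in \<open>auto simp: z_def\<close>)
        then show "leval t (z 0 x) = f x" using fF[OF x] by simp
      qed
    next
      case (Suc m)
      define k where "k = Suc m"
      have k: "k \<in> {1..n}" using Suc.prems k_def by auto
      have IH: "\<forall>x\<in>prodX n X. leval t (z m x) = f x" using Suc by simp
      show ?case
      proof
        fix x assume x: "x \<in> prodX n X"
        define a where "a = x k"
        have a: "a \<in> X k" using x k a_def by auto
        define c where "c = \<phi>0 k (zero k)"
        define d where "d = \<phi>0 k (one k)"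
        define A where "A = leval t ((z m x)(k:=c))"
        define B where "B = leval t ((z m x)(k:=d))"
        have zupd: "z m (x(k:=b)) = (z m x)(k := \<phi>0 k b)" for b
          unfolding z_def k_def by (rule ext) auto
        have fb: "f (x(k:=b)) = A \<union> (\<phi>0 k b \<inter> B)" if b: "b \<in> X k" for b
        proof -
          have "f (x(k:=b)) = leval t ((z m x)(k := \<phi>0 k b))"
            using IH upd_in[OF x k b] zupd by metis
          also have "\<dots> = A \<union> (\<phi>0 k b \<inter> B)" unfolding A_def B_def c_def d_def
            by (rule leval_decomp) (use bnd[OF k b] in auto)
          finally show ?thesis .
        qed
        have xa: "x(k:=a) = x" using a_def by auto
        have fx: "f x = A \<union> (\<phi>0 k a \<inter> B)" using fb[OF a] xa by simp
        have z1: "z (Suc m) x = (z m x)(k := \<psi> k a)"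
          unfolding z_def k_def a_def by (rule ext) auto
        have "leval t (z (Suc m) x) = A \<union> (\<psi> k a \<inter> B)" unfolding z1 A_def B_def c_def d_def
          by (rule leval_decomp) (use psic[OF k a] in auto)
        also have "\<dots> = f x"
        proof
          have z0: "zero k \<in> X k" using X01 k by blast
          have BC0: "f (x(k:=zero k)) \<subseteq> f x" using BC x k unfolding cond_BC_def by blast
          show "A \<union> (\<psi> k a \<inter> B) \<subseteq> f x"
          proof
            fix u assume u: "u \<in> A \<union> (\<psi> k a \<inter> B)"
            show "u \<in> f x"
            proof (cases "u \<in> A")
              case True then show ?thesis using fx by auto
            next
              case False
              then have uB: "u \<in> B" and "u \<in> g k a \<or> u \<in> g k (zero k)" using u unfolding \<psi>_def by auto
              then show ?thesis
              proof (elim disjE)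
                assume "u \<in> g k a"
                then obtain b where b: "b \<in> X k" "le k b a" "u \<in> \<phi>0 k b" unfolding g_def by blast
                have "u \<in> f (x(k:=b))" using fb[OF b(1)] b uB by auto
                then show ?thesis using monoU[OF x k b(1) a b(2)] xa by auto
              next
                assume "u \<in> g k (zero k)"
                then obtain b where b: "b \<in> X k" "le k b (zero k)" "u \<in> \<phi>0 k b" unfolding g_def by blast
                have "u \<in> f (x(k:=b))" using fb[OF b(1)] b uB by auto
                then show ?thesis using monoU[OF x k b(1) z0 b(2)] BC0 by auto
              qed
            qed
          qed
          show "f x \<subseteq> A \<union> (\<psi> k a \<inter> B)" using fx phig[OF k a] unfolding \<psi>_def by auto
        qed
        finally show "leval t (z (Suc m) x) = f x" .
      qed
    qed
    show "\<exists>p \<phi>. polynomial_fun Y n p \<and>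
            (\<forall>k\<in>{1..n}. \<phi> k \<in> X k \<rightarrow> Y \<and> boundary_cond (X k) (zero k) (one k) (\<phi> k) \<and>
               (\<forall>a\<in>X k. \<forall>b\<in>X k. le k a b \<longrightarrow> \<phi> k a \<subseteq> \<phi> k b)) \<and>
            (\<forall>x\<in>prodX n X. f x = p (\<lambda>i\<in>{1..n}. \<phi> i (x i)))"
    proof (intro exI conjI ballI impI)
      show "polynomial_fun Y n (leval t)" unfolding polynomial_fun_def using tv tc by blast
    next
      fix k assume k: "k \<in> {1..n}"
      show "\<psi> k \<in> X k \<rightarrow> Y" using psiY k by blast
      have z0: "zero k \<in> X k" "one k \<in> X k" using X01 k by auto
      show "boundary_cond (X k) (zero k) (one k) (\<psi> k)"
        unfolding boundary_cond_def
      proof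
        fix a assume a: "a \<in> X k"
        have "g k (one k) = \<phi>0 k (one k)" using phig[OF k z0(2)] gd[OF k] by blast
        then show "\<psi> k (zero k) \<subseteq> \<psi> k a \<and> \<psi> k a \<subseteq> \<psi> k (one k)"
          using psic[OF k a] unfolding \<psi>_def by auto
      qed
      show "\<And>a b. a \<in> X k \<Longrightarrow> b \<in> X k \<Longrightarrow> le k a b \<Longrightarrow> \<psi> k a \<subseteq> \<psi> k b"
        using gmono[OF k] unfolding \<psi>_def by blast
    next
      fix x assume x: "x \<in> prodX n X"
      have "f x = leval t (z n x)" using stage[of n] x by simp
      also have "\<dots> = leval t (\<lambda>i\<in>{1..n}. \<psi> i (x i))"
        by (rule leval_cong) (use tv in \<open>auto simp: z_def\<close>)
      finally show "f x = leval t (\<lambda>i\<in>{1..n}. \<psi> i (x i))" .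
    qed
  qed
qed

end
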